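(* Let $f(x) = a_3x^3 + a_2x^2 + a_1x + a_0$ be a real polynomial with $a_3 > 0$ and $a_2^2 - 3a_1a_3 \geq 0$. Consider the condition $(\dagger)$: $\frac{-2a_2^3 + 9a_1a_2a_3 - 2(a_2^2 - 3a_1a_3)^{3/2}}{27a_3^2} \leq a_0 \leq \frac{-2a_2^3 + 9a_1a_2a_3 + 2(a_2^2 - 3a_1a_3)^{3/2}}{27a_3^2}$. Then: (1) all complex roots of $f(x)$ are real and non-negative if and only if $a_2 \leq 0$, $0 \leq a_1 \leq \frac{a_2^2}{3a_3}$, $a_0 \leq 0$ and $(\dagger)$ holds; (2) all complex roots of $f(x)$ are real and positive if and only if $a_2 < 0$, $0 < a_1 \leq \frac{a_2^2}{3a_3}$, $a_0 < 0$ and $(\dagger)$ holds.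
   Context: For a non-negative real $r$, $r^{3/2}$ denotes the non-negative real number $(\sqrt{r})^3$. *)

theory Defs
  imports "HOL-Computational_Algebra.Polynomial" Complex_Main
begin

end

theory Submission
  imports Defs "HOL-Computational_Algebra.Fundamental_Theorem_Algebra"
begin

lemma poly_cubic_complex:
  fixes a0 a1 a2 a3 u v :: real
  shows "poly [:complex_of_real a0, complex_of_real a1, complex_of_real a2, complex_of_real a3:] (Complex u v)
     = Complex (a3*(u^3-3*u*v^2)+a2*(u^2-v^2)+a1*u+a0) (v*(a3*(3*u^2-v^2)+2*a2*u+a1))"
  by (simp add: complex_eq_iff algebra_simps power2_eq_square power3_eq_cube)

lemma ident_complex:
  fixes a0 a1 a2 a3 u v r :: real
  assumes "a2 = -a3*(2*u+r)" "a1 = a3*(u^2+v^2+2*u*r)" "a0 = - a3 * r*(u^2+v^2)"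
  shows "4*(a2^2-3*a1*a3)^3 - (27*a3^2*a0+2*a2^3-9*a1*a2*a3)^2 = -108*a3^6*v^2*((u-r)^2+v^2)^2"
  unfolding assms by algebra

lemma ident_real:
  fixes a0 a1 a2 a3 s0 s1 s2 :: real
  assumes "a2 = - a3*(s0+s1+s2)" "a1 = a3*(s0*s1+s0*s2+s1*s2)" "a0 = -a3*s0*s1*s2"
  shows "4*(a2^2-3*a1*a3)^3 - (27*a3^2*a0+2*a2^3-9*a1*a2*a3)^2 = 27*a3^6*((s0-s1)*(s0-s2)*(s1-s2))^2"
  unfolding assms by algebra

lemma dagger_iff:
  fixes a0 a1 a2 a3 D :: real
  assumes "a3 > 0" "D \<ge> 0"
  shows "((- 2 * a2 ^ 3 + 9 * a1 * a2 * a3 - 2 * (sqrt D) ^ 3) / (27 * a3\<^sup>2) \<le> a0 \<and>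
      a0 \<le> (- 2 * a2 ^ 3 + 9 * a1 * a2 * a3 + 2 * (sqrt D) ^ 3) / (27 * a3\<^sup>2))
    \<longleftrightarrow> (27*a3^2*a0+2*a2^3-9*a1*a2*a3)^2 \<le> 4*D^3"
proof -
  let ?E = "27*a3^2*a0+2*a2^3-9*a1*a2*a3"
  let ?S = "sqrt D"
  have p: "27 * a3\<^sup>2 > 0" using assms by simp
  have "((- 2 * a2 ^ 3 + 9 * a1 * a2 * a3 - 2 * ?S ^ 3) / (27 * a3\<^sup>2) \<le> a0 \<and>
      a0 \<le> (- 2 * a2 ^ 3 + 9 * a1 * a2 * a3 + 2 * ?S ^ 3) / (27 * a3\<^sup>2))
     \<longleftrightarrow> (- 2 * a2 ^ 3 + 9 * a1 * a2 * a3 - 2 * ?S ^ 3 \<le> a0 * (27 * a3\<^sup>2) \<and>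
      a0 * (27 * a3\<^sup>2) \<le> - 2 * a2 ^ 3 + 9 * a1 * a2 * a3 + 2 * ?S ^ 3)"
    using p by (simp add: pos_divide_le_eq pos_le_divide_eq)
  also have "\<dots> \<longleftrightarrow> \<bar>?E\<bar> \<le> 2 * ?S ^ 3" by (auto simp: abs_le_iff algebra_simps)
  also have "\<dots> \<longleftrightarrow> ?E^2 \<le> (2 * ?S ^ 3)^2"
  proof -
    have "2 * ?S ^ 3 \<ge> 0" using assms by simp
    then have "\<bar>2 * ?S ^ 3\<bar> = 2 * ?S ^ 3" by simp
    then show ?thesis using abs_le_square_iff[of ?E "2 * ?S ^ 3"] by simp
  qed
  also have "(2 * ?S ^ 3)^2 = 4 * (?S^2)^3" by (simp add: power_mult_distrib power_mult[symmetric] mult.commute)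
  also have "?S^2 = D" using assms by simp
  finally show ?thesis .
qed

lemma roots_real:
  fixes a0 a1 a2 a3 :: real and z :: complex
  assumes "a3 > 0"
    and E: "(27*a3^2*a0+2*a2^3-9*a1*a2*a3)^2 \<le> 4*(a2^2-3*a1*a3)^3"
    and z: "poly [:complex_of_real a0, complex_of_real a1, complex_of_real a2, complex_of_real a3:] z = 0"
  shows "z \<in> \<real>"
proof (rule ccontr)
  assume nz: "z \<notin> \<real>"
  obtain u v where uv: "z = Complex u v" by (cases z)
  have v: "v \<noteq> 0" using nz uv by (auto simp: complex_is_Real_iff)
  from z have e1: "a3*(u^3-3*u*v^2)+a2*(u^2-v^2)+a1*u+a0 = 0"
    and e2: "v*(a3*(3*u^2-v^2)+2*a2*u+a1) = 0"
    unfolding uv poly_cubic_complex by (simp_all add: complex_eq_iff)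
  from e2 v have e2': "a1 = -a3*(3*u^2-v^2)-2*a2*u" by simp
  define r where "r = -a2/a3 - 2*u"
  have h2: "a2 = -a3*(2*u+r)" using assms(1) unfolding r_def by (simp add: field_simps)
  have h1: "a1 = a3*(u^2+v^2+2*u*r)" unfolding e2' h2 by (simp add: algebra_simps power2_eq_square)
  have h0: "a0 = - a3 * r*(u^2+v^2)" using e1 unfolding h1 h2
    by (simp add: algebra_simps power2_eq_square power3_eq_cube)
  have "4*(a2^2-3*a1*a3)^3 - (27*a3^2*a0+2*a2^3-9*a1*a2*a3)^2 = -108*a3^6*v^2*((u-r)^2+v^2)^2"
    by (rule ident_complex[OF h2 h1 h0])
  moreover have "a3^6*v^2*((u-r)^2+v^2)^2 > 0" using v assms(1) by simp
  ultimately show False using E by linarith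
qed

lemma real_root_sign:
  fixes a0 a1 a2 a3 x :: real
  assumes "a3 > 0" "a2 \<le> 0" "a1 \<ge> 0" "a0 \<le> 0" "x \<le> 0"
    and "a0 < 0 \<or> x < 0"
  shows "a0 + x*(a1 + x*(a2 + x*a3)) < 0"
proof -
  have "x*x \<ge> 0" by simp
  have t1: "a3*(x*x*x) \<le> 0"
    using assms by (simp add: mult_nonneg_nonpos mult_nonpos_nonpos mult_nonneg_nonneg)
  have t2: "a2*(x*x) \<le> 0" using assms by (simp add: mult_nonpos_nonneg)
  have t3: "a1*x \<le> 0" using assms by (simp add: mult_nonneg_nonpos)
  have t1': "x < 0 \<Longrightarrow> a3*(x*x*x) < 0"
    using assms(1) by (simp add: mult_pos_neg mult_neg_neg)
  have "a0 + x*(a1 + x*(a2 + x*a3)) = a0 + a1*x + a2*(x*x) + a3*(x*x*x)" by (simp add: algebra_simps)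
  then show ?thesis using t1 t2 t3 t1' assms(6) assms(4) by linarith
qed

theorem proposition3p2:
  fixes a0 a1 a2 a3 :: real
  defines "f \<equiv> [:complex_of_real a0, complex_of_real a1, complex_of_real a2, complex_of_real a3:]"
  defines "D \<equiv> a2\<^sup>2 - 3 * a1 * a3"
  defines "dagger \<equiv>
      (- 2 * a2 ^ 3 + 9 * a1 * a2 * a3 - 2 * (sqrt D) ^ 3) / (27 * a3\<^sup>2) \<le> a0 \<and>
      a0 \<le> (- 2 * a2 ^ 3 + 9 * a1 * a2 * a3 + 2 * (sqrt D) ^ 3) / (27 * a3\<^sup>2)"
  assumes "a3 > 0" and "D \<ge> 0"
  shows "((\<forall>z. poly f z = 0 \<longrightarrow> z \<in> \<real> \<and> Re z \<ge> 0) \<longleftrightarrow>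
            a2 \<le> 0 \<and> 0 \<le> a1 \<and> a1 \<le> a2\<^sup>2 / (3 * a3) \<and> a0 \<le> 0 \<and> dagger)
       \<and> ((\<forall>z. poly f z = 0 \<longrightarrow> z \<in> \<real> \<and> Re z > 0) \<longleftrightarrow>
            a2 < 0 \<and> 0 < a1 \<and> a1 \<le> a2\<^sup>2 / (3 * a3) \<and> a0 < 0 \<and> dagger)"
proof -
  have a3: "a3 > 0" by fact
  have dag: "dagger \<longleftrightarrow> (27*a3^2*a0+2*a2^3-9*a1*a2*a3)^2 \<le> 4*D^3"
    unfolding dagger_def using dagger_iff[OF a3 assms(5)] by blast
  have a1le: "a1 \<le> a2\<^sup>2 / (3 * a3)"
    using assms(5) a3 unfolding D_def by (simp add: pos_le_divide_eq mult.commute mult.left_commute)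
  obtain root where rt: "smult (lead_coeff f) (\<Prod>i<degree f. [:-root i, 1:]) = f"
    using complex_poly_decompose' by blast
  have degf: "degree f = 3" and lcf: "lead_coeff f = of_real a3"
    using a3 unfolding f_def by simp_all
  have fprod: "f = smult (of_real a3) ([:-root 0, 1:] * [:-root 1, 1:] * [:-root 2, 1:])"
    using rt lcf unfolding degf by (simp add: lessThan_nat_numeral mult_ac)
  have isroot: "poly f (root i) = 0" if "i \<in> {0,1,2::nat}" for i
  proof -
    have "poly f x = of_real a3 * (poly [:-root 0,1:] x * poly [:-root 1,1:] x * poly [:-root 2,1:] x)" for x
      by (subst fprod, simp only: poly_smult poly_mult)
    then show ?thesis using that by auto
  qed
  have fwd: "\<exists>s0 s1 s2. a2 = - a3*(s0+s1+s2) \<and> a1 = a3*(s0*s1+s0*s2+s1*s2) \<and> a0 = -a3*s0*s1*s2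
       \<and> P s0 \<and> P s1 \<and> P s2"
    if H: "\<forall>z. poly f z = 0 \<longrightarrow> z \<in> \<real> \<and> P (Re z)" for P
  proof -
    have R: "root i = of_real (Re (root i)) \<and> P (Re (root i))" if "i \<in> {0,1,2::nat}" for i
      using H isroot[OF that] by (metis Reals_cases Re_complex_of_real)
    define s0 s1 s2 where "s0 = Re (root 0)" "s1 = Re (root 1)" "s2 = Re (root 2)"
    have r: "root 0 = of_real s0" "root 1 = of_real s1" "root 2 = of_real s2"
      "P s0" "P s1" "P s2" using R[of 0] R[of 1] R[of 2] unfolding s0_s1_s2_def by auto
    have "[:complex_of_real a0, complex_of_real a1, complex_of_real a2, complex_of_real a3:]
       = smult (of_real a3) ([:-of_real s0,1:]*[:-of_real s1,1:]*[:-of_real s2,1:])"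
      using fprod unfolding f_def r(1-3) .
    then have "a2 = - a3*(s0+s1+s2) \<and> a1 = a3*(s0*s1+s0*s2+s1*s2) \<and> a0 = -a3*s0*s1*s2"
      apply (simp add: algebra_simps)
      apply (simp flip: of_real_mult of_real_add of_real_minus of_real_diff)
      done
    then show ?thesis using r(4-6) by blast
  qed
  have bwd: "poly f z = 0 \<Longrightarrow> z \<in> \<real>" if "dagger" for z
    using roots_real[OF a3, of a0 a2 a1 z] that dag unfolding f_def D_def by blast
  have polyreal: "poly f (of_real x) = of_real (a0 + x*(a1 + x*(a2 + x*a3)))" for x
    unfolding f_def by simp
  have part1: "(\<forall>z. poly f z = 0 \<longrightarrow> z \<in> \<real> \<and> Re z \<ge> 0) \<longleftrightarrow>
            a2 \<le> 0 \<and> 0 \<le> a1 \<and> a1 \<le> a2\<^sup>2 / (3 * a3) \<and> a0 \<le> 0 \<and> dagger"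
  proof
    assume H: "\<forall>z. poly f z = 0 \<longrightarrow> z \<in> \<real> \<and> Re z \<ge> 0"
    obtain s0 s1 s2 where s: "a2 = - a3*(s0+s1+s2)" "a1 = a3*(s0*s1+s0*s2+s1*s2)" "a0 = -a3*s0*s1*s2"
      "s0 \<ge> 0" "s1 \<ge> 0" "s2 \<ge> 0"
      using fwd[of "\<lambda>x. x \<ge> 0"] H by blast
    have "a2 \<le> 0" using s a3 by simp
    moreover have "a1 \<ge> 0" using s a3 by simp
    moreover have "a0 \<le> 0" using s a3 by simp
    moreover have "dagger" unfolding dag D_def
      using ident_real[OF s(1-3)] a3 by (smt (verit) zero_le_power zero_le_mult_iff zero_le_power2)
    ultimately show "a2 \<le> 0 \<and> 0 \<le> a1 \<and> a1 \<le> a2\<^sup>2 / (3 * a3) \<and> a0 \<le> 0 \<and> dagger"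
      using a1le by blast
  next
    assume C: "a2 \<le> 0 \<and> 0 \<le> a1 \<and> a1 \<le> a2\<^sup>2 / (3 * a3) \<and> a0 \<le> 0 \<and> dagger"
    show "\<forall>z. poly f z = 0 \<longrightarrow> z \<in> \<real> \<and> Re z \<ge> 0"
    proof (intro allI impI)
      fix z assume z: "poly f z = 0"
      then have zr: "z \<in> \<real>" using bwd C by blast
      then obtain x where x: "z = of_real x" by (metis Reals_cases)
      have "Re z \<ge> 0"
      proof (rule ccontr)
        assume "\<not> Re z \<ge> 0"
        then have "x < 0" using x by simp
        then have "a0 + x*(a1 + x*(a2 + x*a3)) < 0" using real_root_sign[of a3 a2 a1 a0 x] C a3 by simp
        then show False using z polyreal[of x] x by (metis less_irrefl of_real_eq_0_iff)
      qed
      then show "z \<in> \<real> \<and> Re z \<ge> 0" using zr by blast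
    qed
  qed
  have part2: "(\<forall>z. poly f z = 0 \<longrightarrow> z \<in> \<real> \<and> Re z > 0) \<longleftrightarrow>
            a2 < 0 \<and> 0 < a1 \<and> a1 \<le> a2\<^sup>2 / (3 * a3) \<and> a0 < 0 \<and> dagger"
  proof
    assume H: "\<forall>z. poly f z = 0 \<longrightarrow> z \<in> \<real> \<and> Re z > 0"
    obtain s0 s1 s2 where s: "a2 = - a3*(s0+s1+s2)" "a1 = a3*(s0*s1+s0*s2+s1*s2)" "a0 = -a3*s0*s1*s2"
      "s0 > 0" "s1 > 0" "s2 > 0"
      using fwd[of "\<lambda>x. x > 0"] H by blast
    have "a2 < 0" using s a3 by simp
    moreover have "a1 > 0" using s a3 by (simp add: add_pos_pos)
    moreover have "a0 < 0" using s a3 by simp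
    moreover have "dagger" unfolding dag D_def
      using ident_real[OF s(1-3)] a3 by (smt (verit) zero_le_power zero_le_mult_iff zero_le_power2)
    ultimately show "a2 < 0 \<and> 0 < a1 \<and> a1 \<le> a2\<^sup>2 / (3 * a3) \<and> a0 < 0 \<and> dagger"
      using a1le by blast
  next
    assume C: "a2 < 0 \<and> 0 < a1 \<and> a1 \<le> a2\<^sup>2 / (3 * a3) \<and> a0 < 0 \<and> dagger"
    show "\<forall>z. poly f z = 0 \<longrightarrow> z \<in> \<real> \<and> Re z > 0"
    proof (intro allI impI)
      fix z assume z: "poly f z = 0"
      then have zr: "z \<in> \<real>" using bwd C by blast
      then obtain x where x: "z = of_real x" by (metis Reals_cases)
      have "Re z > 0"
      proof (rule ccontr)
        assume "\<not> Re z > 0"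
        then have "x \<le> 0" using x by simp
        then have "a0 + x*(a1 + x*(a2 + x*a3)) < 0" using real_root_sign[of a3 a2 a1 a0 x] C a3 by simp
        then show False using z polyreal[of x] x by (metis less_irrefl of_real_eq_0_iff)
      qed
      then show "z \<in> \<real> \<and> Re z > 0" using zr by blast
    qed
  qed
  show ?thesis using part1 part2 by blast
qed

end
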